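(* Let $\{\mathcal S,\mathcal C,\mathcal R,\mathcal K(t)\}$ with $\mathcal S=\{S_1,\dots,S_N\}$ be a weakly reversible non-autonomous mass-action system with bounded kinetics, and let $D\subset\mathbb R^N_{>0}$. Then at least one of the following holds. (C1) There exists $M>0$ such that for every $x\in D$ having $x_i>M$ or $x_i<1/M$ for at least one $i\in\{1,\dots,N\}$, $$\sum_k\kappa_k(t)\,x^{y_k}(y_k'-y_k)\cdot\ln(x)<0\quad\text{for all }t\ge0.$$ (C2) There exists a sequence $\{x_n\}\subset D$ with $\lim_{n\to\infty}x_{n,i}\in\{0,\infty\}$ for at least one $i$, such that $\mathcal C$ is partitioned along $\{x_n\}$ with tiers $T_1,\dots,T_P$ and some constant $C$, and $T_1$ is a union of linkage classes.
   Context: A chemical reaction network on species $S_1,\dots,S_N$ consists of a finite set $\mathcal C\subset\mathbb Z^N_{\ge0}$ of complexes and a finite set $\mathcal R$ of reactions $y\to y'$ with $y,y'\in\mathcal C$, $y\ne y'$, such that every species has positive coefficient in some complex and every complex appears in some reaction. Reactions are enumerated $y_k\to y_k'$, $k=1,\dots,|\mathcal R|$. The reaction diagram is the directed graph with vertex set $\mathcal C$ and an edge $y\to y'$ for each reaction; its connected components are the linkage classes. $T\subset\mathcal C$ is a union of linkage classes if it is the union of the complex sets of some nonempty collection of linkage classes. The network is weakly reversible if each linkage class is strongly connected. A non-autonomous mass-action system with bounded kinetics is such a network together with functions $\kappa_k:[0,\infty)\to\mathbb R$ and a constant $\eta>0$ with $\eta<\kappa_k(t)<1/\eta$ for all $t\ge0$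 and all $k$, with dynamics $\dot x(t)=\sum_k\kappa_k(t)x(t)^{y_k}(y_k'-y_k)$. For $u\in\mathbb R^N_{\ge0}$, $v\in\mathbb R^N$, $u^v=\prod_iu_i^{v_i}$ ($0^0=1$); $\ln(x)=(\ln x_1,\dots,\ln x_N)$. $\mathcal C$ is partitioned along $\{x_n\}$ if there exist a partition $\{T_i\}_{i=1}^P$ of $\mathcal C$ into nonempty disjoint tiers and $C>1$ such that (i) $y_j,y_k\in T_i$ implies $\frac1Cx_n^{y_j}\le x_n^{y_k}\le Cx_n^{y_j}$ for all $n$, and (ii) $y_j\in T_i$, $y_k\in T_{i+m}$, $m\ge1$ implies $x_n^{y_j}/x_n^{y_k}\to\infty$. *)

theory Defs
  imports "HOL-Analysis.Analysis"
begin

type_synonym 'n complex = "'n \<Rightarrow> nat"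
type_synonym 'n reaction = "'n complex \<times> 'n complex"

definition crn :: "'n::finite complex set \<Rightarrow> 'n reaction set \<Rightarrow> bool" where
  "crn C R \<longleftrightarrow> finite C \<and> finite R \<and>
     (\<forall>(y, y') \<in> R. y \<in> C \<and> y' \<in> C \<and> y \<noteq> y') \<and>
     (\<forall>i. \<exists>y \<in> C. y i > 0) \<and>
     (\<forall>y \<in> C. \<exists>(a, b) \<in> R. y = a \<or> y = b)"

text \<open>x^y = prod_i x_i^{y_i} (with 0^0 = 1).\<close>
definition mpow :: "('n::finite \<Rightarrow> real) \<Rightarrow> 'n complex \<Rightarrow> real" where
  "mpow x y = (\<Prod>i\<in>UNIV. x i ^ y i)"

definition linked :: "'n reaction set \<Rightarrow> 'n complex \<Rightarrow> 'n complex \<Rightarrow> bool" where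
  "linked R y y' \<longleftrightarrow> (y, y') \<in> (R \<union> R\<inverse>)\<^sup>*"

definition weakly_reversible :: "'n reaction set \<Rightarrow> bool" where
  "weakly_reversible R \<longleftrightarrow> (\<forall>y y'. linked R y y' \<longrightarrow> (y, y') \<in> R\<^sup>*)"

definition union_of_linkage_classes ::
  "'n complex set \<Rightarrow> 'n reaction set \<Rightarrow> 'n complex set \<Rightarrow> bool" where
  "union_of_linkage_classes C R T \<longleftrightarrow> T \<noteq> {} \<and> T \<subseteq> C \<and>
     (\<forall>y \<in> T. \<forall>y'. linked R y y' \<longrightarrow> y' \<in> T)"

definition bounded_kinetics ::
  "'n reaction set \<Rightarrow> ('n reaction \<Rightarrow> real \<Rightarrow> real) \<Rightarrow> real \<Rightarrow> bool" where
  "bounded_kinetics R \<kappa> \<eta> \<longleftrightarrow> \<eta> > 0 \<and>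
     (\<forall>r \<in> R. \<forall>t \<ge> 0. \<eta> < \<kappa> r t \<and> \<kappa> r t < 1 / \<eta>)"

definition mass_action_field ::
  "'n::finite reaction set \<Rightarrow> ('n reaction \<Rightarrow> real \<Rightarrow> real) \<Rightarrow> real \<Rightarrow> ('n \<Rightarrow> real) \<Rightarrow> ('n \<Rightarrow> real)" where
  "mass_action_field R \<kappa> t x =
     (\<lambda>i. \<Sum>r\<in>R. \<kappa> r t * mpow x (fst r) * (real (snd r i) - real (fst r i)))"

definition dotp :: "('n::finite \<Rightarrow> real) \<Rightarrow> ('n \<Rightarrow> real) \<Rightarrow> real" where
  "dotp u v = (\<Sum>i\<in>UNIV. u i * v i)"

definition partitioned_along ::
  "'n::finite complex set \<Rightarrow> (nat \<Rightarrow> 'n \<Rightarrow> real) \<Rightarrow> nat \<Rightarrow> (nat \<Rightarrow> 'n complex set) \<Rightarrow> real \<Rightarrow> bool" where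
  "partitioned_along C xs P T K \<longleftrightarrow> P \<ge> 1 \<and> K > 1 \<and>
     (\<forall>i\<in>{1..P}. T i \<noteq> {}) \<and>
     (\<forall>i\<in>{1..P}. \<forall>j\<in>{1..P}. i \<noteq> j \<longrightarrow> T i \<inter> T j = {}) \<and>
     (\<Union>i\<in>{1..P}. T i) = C \<and>
     (\<forall>i\<in>{1..P}. \<forall>yj\<in>T i. \<forall>yk\<in>T i. \<forall>n.
        mpow (xs n) yj / K \<le> mpow (xs n) yk \<and> mpow (xs n) yk \<le> K * mpow (xs n) yj) \<and>
     (\<forall>i m. i \<ge> 1 \<longrightarrow> m \<ge> 1 \<longrightarrow> i + m \<le> P \<longrightarrow>
        (\<forall>yj\<in>T i. \<forall>yk\<in>T (i + m).
           filterlim (\<lambda>n. mpow (xs n) yj / mpow (xs n) yk) at_top sequentially))"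

end

theory Submission imports Defs begin

lemma disjCI2: "(\<not> P \<Longrightarrow> Q) \<Longrightarrow> P \<or> Q" by blast

lemma trich:
  fixes f :: "nat \<Rightarrow> real"
  assumes "(\<lambda>n. ereal (f n)) \<longlonglongrightarrow> l"
  shows "filterlim f at_top sequentially \<or> (\<exists>B. \<forall>n. \<bar>f n\<bar> \<le> B) \<or> filterlim (\<lambda>n. - f n) at_top sequentially"
proof (cases l)
  case (real c)
  then have "f \<longlonglongrightarrow> c" using assms by simp
  then have "Bseq f" using convergent_imp_Bseq convergent_def by blast
  then show ?thesis unfolding Bseq_def by auto
next
  case PInf
  then show ?thesis using assms tendsto_PInfty_eq_at_top by blast
next
  case MInf
  then have "\<forall>r. eventually (\<lambda>n. ereal (f n) < ereal r) sequentially" using assms tendsto_MInfty[of "\<lambda>n. ereal (f n)" sequentially] by simp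
  have "\<forall>Z. eventually (\<lambda>n. Z \<le> - f n) sequentially"
  proof
    fix Z :: real
    have "eventually (\<lambda>n. ereal (f n) < ereal (- Z)) sequentially" using \<open>\<forall>r. _\<close> by blast
    then show "eventually (\<lambda>n. Z \<le> - f n) sequentially" by eventually_elim simp
  qed
  then show ?thesis by (simp add: filterlim_at_top)
qed

lemma subseq_conv:
  fixes g :: "'a \<Rightarrow> nat \<Rightarrow> ereal"
  assumes "finite S"
  shows "\<exists>r. strict_mono r \<and> (\<forall>s\<in>S. \<exists>l. (\<lambda>n. g s (r n)) \<longlonglongrightarrow> l)"
  using assms
proof (induction S rule: finite_induct)
  case empty
  then show ?case using strict_mono_id by (metis empty_iff)
next
  case (insert a S)
  then obtain r where r: "strict_mono r" "\<forall>s\<in>S. \<exists>l. (\<lambda>n. g s (r n)) \<longlonglongrightarrow> l" by blast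
  obtain l r' where r': "strict_mono r'" "((\<lambda>n. g a (r n)) \<circ> r') \<longlonglongrightarrow> l"
    using compact_complete_linorder by blast
  have "strict_mono (r \<circ> r')" using r r' by (simp add: strict_mono_o)
  moreover have "\<forall>s\<in>insert a S. \<exists>l. (\<lambda>n. g s ((r \<circ> r') n)) \<longlonglongrightarrow> l"
  proof
    fix s assume "s \<in> insert a S"
    then show "\<exists>l. (\<lambda>n. g s ((r \<circ> r') n)) \<longlonglongrightarrow> l"
    proof
      assume "s = a" then show ?thesis using r' by (auto simp: comp_def)
    next
      assume "s \<in> S"
      then obtain l where "(\<lambda>n. g s (r n)) \<longlonglongrightarrow> l" using r by blast
      from LIMSEQ_subseq_LIMSEQ[OF this r'(1)] show ?thesis by (auto simp: comp_def)
    qed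
  qed
  ultimately show ?case by blast
qed

lemma mpow_pos: "(\<forall>i. x i > 0) \<Longrightarrow> mpow x y > 0"
  unfolding mpow_def by (simp add: prod_pos)

lemma ln_mpow: "(\<forall>i. x i > 0) \<Longrightarrow> ln (mpow x y) = (\<Sum>i\<in>UNIV. real (y i) * ln (x i))"
  proof -
  assume h: "\<forall>i. x i > 0"
  have "ln (\<Prod>i\<in>UNIV. x i ^ y i) = (\<Sum>i\<in>UNIV. ln (x i ^ y i))"
    using h by (intro ln_prod) (simp_all add: power_eq_0_iff less_imp_neq[symmetric])
  also have "\<dots> = (\<Sum>i\<in>UNIV. real (y i) * ln (x i))"
    using h by (simp add: ln_realpow)
  finally show ?thesis unfolding mpow_def .
qed

lemma dot_eq:
  assumes "\<forall>i. x i > 0" "finite R"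
  shows "dotp (mass_action_field R \<kappa> t x) (\<lambda>i. ln (x i)) =
    (\<Sum>r\<in>R. \<kappa> r t * mpow x (fst r) * (ln (mpow x (snd r)) - ln (mpow x (fst r))))"
proof -
  have "dotp (mass_action_field R \<kappa> t x) (\<lambda>i. ln (x i)) =
     (\<Sum>i\<in>UNIV. \<Sum>r\<in>R. \<kappa> r t * mpow x (fst r) * ((real (snd r i) - real (fst r i)) * ln (x i)))"
    unfolding dotp_def mass_action_field_def by (simp add: sum_distrib_right mult.assoc)
  also have "\<dots> = (\<Sum>r\<in>R. \<Sum>i\<in>UNIV. \<kappa> r t * mpow x (fst r) * ((real (snd r i) - real (fst r i)) * ln (x i)))"
    by (rule sum.swap)
  also have "\<dots> = (\<Sum>r\<in>R. \<kappa> r t * mpow x (fst r) * (ln (mpow x (snd r)) - ln (mpow x (fst r))))"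
    using assms(1) by (simp add: ln_mpow sum_distrib_left[symmetric] sum_subtractf[symmetric] left_diff_distrib)
  finally show ?thesis .
qed

lemma term_bound:
  fixes a b k :: real
  assumes "a > 0" "b > 0" "k > 0"
  shows "k * b * (ln a - ln b) \<le> k * a"
proof -
  have "ln (a / b) \<le> a / b - 1" using assms by (intro ln_le_minus_one) simp
  then have "b * (ln a - ln b) \<le> b * (a / b - 1)" using assms by (simp add: ln_div)
  also have "\<dots> = a - b" using assms by (simp add: field_simps)
  finally have "b * (ln a - ln b) \<le> a" using assms by simp
  then show ?thesis using assms by (metis mult.assoc mult_left_mono order_less_imp_le)
qed

lemma key_contra:
  fixes m :: "nat \<Rightarrow> 'c \<Rightarrow> real" and k :: "nat \<Rightarrow> ('c \<times> 'c) \<Rightarrow> real"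
  assumes fin: "finite R" and r0: "(y0, y1) \<in> R"
    and pos: "\<And>n y. m n y > 0"
    and eta: "\<eta> > 0" and kb: "\<And>n r. r \<in> R \<Longrightarrow> \<eta> < k n r \<and> k n r < 1 / \<eta>"
    and dot: "\<And>n. 0 \<le> (\<Sum>r\<in>R. k n r * m n (fst r) * (ln (m n (snd r)) - ln (m n (fst r))))"
    and dom: "\<forall>r\<in>R. \<exists>B. eventually (\<lambda>n. m n (snd r) \<le> B * m n y0) sequentially"
    and up: "filterlim (\<lambda>n. ln (m n y0) - ln (m n y1)) at_top sequentially"
  shows False
proof -
  from dom obtain B where B: "\<forall>r\<in>R. eventually (\<lambda>n. m n (snd r) \<le> B r * m n y0) sequentially"
    by metis
  define Bs where "Bs = (\<Sum>r\<in>R. \<bar>B r\<bar>)"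
  have ev1: "eventually (\<lambda>n. \<forall>r\<in>R. m n (snd r) \<le> B r * m n y0) sequentially"
    using B fin by (simp add: eventually_ball_finite)
  have ev2: "eventually (\<lambda>n. Bs / \<eta> / \<eta> + 1 \<le> ln (m n y0) - ln (m n y1)) sequentially"
    using up by (simp add: filterlim_at_top)
  from eventually_conj[OF ev1 ev2] obtain n where
    h1: "\<forall>r\<in>R. m n (snd r) \<le> B r * m n y0" and h2: "Bs / \<eta> / \<eta> + 1 \<le> ln (m n y0) - ln (m n y1)"
  proof -
    from eventually_conj[OF ev1 ev2] obtain N where "\<forall>n\<ge>N. (\<forall>r\<in>R. m n (snd r) \<le> B r * m n y0) \<and> Bs / \<eta> / \<eta> + 1 \<le> ln (m n y0) - ln (m n y1)"
      unfolding eventually_sequentially by blast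
    then show ?thesis using that by blast
  qed
  define D where "D = ln (m n y1) - ln (m n y0)"
  have "Bs \<ge> 0" unfolding Bs_def by (simp add: sum_nonneg)
  then have "Bs / \<eta> / \<eta> \<ge> 0" using eta by simp
  then have Dneg: "D < 0" using h2 unfolding D_def by linarith
  have m0: "m n y0 > 0" by (rule pos)
  let ?t = "\<lambda>r. k n r * m n (fst r) * (ln (m n (snd r)) - ln (m n (fst r)))"
  have t0: "?t (y0, y1) \<le> \<eta> * m n y0 * D"
  proof -
    have "(k n (y0, y1) - \<eta>) * m n y0 * D \<le> 0"
      using kb[OF r0, of n] m0 Dneg by (intro mult_nonneg_nonpos) auto
    then show ?thesis unfolding D_def by (simp add: algebra_simps)
  qed
  have tr: "?t r \<le> (1 / \<eta>) * (\<bar>B r\<bar> * m n y0)" if "r \<in> R" for r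
  proof -
    have kp: "0 < k n r" using kb[OF that, of n] eta by linarith
    have "?t r \<le> k n r * m n (snd r)"
      using term_bound[OF pos pos kp] by simp
    also have "\<dots> \<le> (1 / \<eta>) * m n (snd r)"
      using kb[OF that, of n] pos[of n "snd r"] by (intro mult_right_mono) auto
    also have "\<dots> \<le> (1 / \<eta>) * (\<bar>B r\<bar> * m n y0)"
    proof (rule mult_left_mono)
      have "m n (snd r) \<le> B r * m n y0" using h1 that by blast
      also have "\<dots> \<le> \<bar>B r\<bar> * m n y0" using m0 by (intro mult_right_mono) auto
      finally show "m n (snd r) \<le> \<bar>B r\<bar> * m n y0" .
    qed (use eta in simp)
    finally show ?thesis .
  qed
  have "(\<Sum>r\<in>R. ?t r) = ?t (y0, y1) + (\<Sum>r\<in>R - {(y0, y1)}. ?t r)"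
    using fin r0 by (simp add: sum.remove)
  also have "\<dots> \<le> \<eta> * m n y0 * D + (\<Sum>r\<in>R - {(y0, y1)}. (1 / \<eta>) * (\<bar>B r\<bar> * m n y0))"
    using t0 tr by (intro add_mono sum_mono) auto
  also have "\<dots> \<le> \<eta> * m n y0 * D + (\<Sum>r\<in>R. (1 / \<eta>) * (\<bar>B r\<bar> * m n y0))"
    using fin eta m0 by (intro add_left_mono sum_mono2) auto
  also have "\<dots> = m n y0 * (\<eta> * D + Bs / \<eta>)"
    unfolding Bs_def by (simp add: sum_distrib_left sum_distrib_right sum_divide_distrib algebra_simps)
  also have "\<dots> < 0"
  proof -
    have "\<eta> * D \<le> - (Bs / \<eta>) - \<eta>" using h2 eta unfolding D_def
      by (simp add: field_simps)
    then have "\<eta> * D + Bs / \<eta> < 0" using eta by simp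
    then show ?thesis using m0 by (simp add: mult_pos_neg)
  qed
  finally show False using dot[of n] by simp
qed

lemma tiers_exist:
  fixes Up Fin :: "'c \<Rightarrow> 'c \<Rightarrow> bool" and C :: "'c set"
  assumes fin: "finite C" and ne: "C \<noteq> {}"
    and trich: "\<And>y z. y \<in> C \<Longrightarrow> z \<in> C \<Longrightarrow> Up y z \<or> Fin y z \<or> Up z y"
    and irr: "\<And>y. y \<in> C \<Longrightarrow> \<not> Up y y"
    and UU: "\<And>w y z. w \<in> C \<Longrightarrow> y \<in> C \<Longrightarrow> z \<in> C \<Longrightarrow> Up w y \<Longrightarrow> Up y z \<Longrightarrow> Up w z"
    and UF: "\<And>w y z. w \<in> C \<Longrightarrow> y \<in> C \<Longrightarrow> z \<in> C \<Longrightarrow> Up w y \<Longrightarrow> Fin y z \<Longrightarrow> Up w z"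
    and Fsym: "\<And>y z. y \<in> C \<Longrightarrow> z \<in> C \<Longrightarrow> Fin y z \<Longrightarrow> Fin z y"
  obtains P T where "(P::nat) \<ge> 1" "\<forall>i\<in>{1..P}. T i \<noteq> {}"
     "\<forall>i\<in>{1..P}. \<forall>j\<in>{1..P}. i \<noteq> j \<longrightarrow> T i \<inter> T j = {}"
     "(\<Union>i\<in>{1..P}. T i) = C"
     "\<forall>i\<in>{1..P}. \<forall>y\<in>T i. \<forall>z\<in>T i. Fin y z"
     "\<forall>i m. i \<ge> 1 \<longrightarrow> m \<ge> 1 \<longrightarrow> i + m \<le> P \<longrightarrow> (\<forall>y\<in>T i. \<forall>z\<in>T (i + m). Up y z)"
     "\<forall>y\<in>T 1. \<forall>z\<in>C. \<not> Up z y" "T 1 \<subseteq> C"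
proof -
  define k where "k y = card {w\<in>C. Up w y}" for y
  have kless: "k y < k z" if "y \<in> C" "z \<in> C" "Up y z" for y z
  proof -
    have "{w\<in>C. Up w y} \<subset> {w\<in>C. Up w z}"
      using that UU irr by blast
    then show ?thesis unfolding k_def using fin by (intro psubset_card_mono) auto
  qed
  have keq: "k y = k z" if "y \<in> C" "z \<in> C" "Fin y z" for y z
  proof -
    have "{w\<in>C. Up w y} = {w\<in>C. Up w z}"
      using that UF Fsym by blast
    then show ?thesis unfolding k_def by simp
  qed
  have keqF: "Fin y z" if "y \<in> C" "z \<in> C" "k y = k z" for y z
    using trich[OF that(1,2)] kless[OF that(1,2)] kless[OF that(2,1)] that(3) by auto
  have klessU: "Up y z" if "y \<in> C" "z \<in> C" "k y < k z" for y z
    using trich[OF that(1,2)] keq[OF that(1,2)] kless[OF that(2,1)] that(3) by auto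
  define KS where "KS = k ` C"
  define ks where "ks = sorted_list_of_set KS"
  define P where "P = length ks"
  define T where "T i = {y\<in>C. k y = ks ! (i - 1)}" for i
  have finKS: "finite KS" using fin unfolding KS_def by simp
  have setks: "set ks = KS" unfolding ks_def using finKS by simp
  have sks: "sorted_wrt (<) ks" unfolding ks_def using strict_sorted_list_of_set by blast
  have dks: "distinct ks" unfolding ks_def by simp
  have P1: "P \<ge> 1" unfolding P_def using setks ne KS_def
    by (metis One_nat_def image_is_empty length_0_conv less_one not_less set_empty)
  have nth_in: "ks ! (i - 1) \<in> KS" if "i \<in> {1..P}" for i
    using that setks unfolding P_def by (metis atLeastAtMost_iff diff_less less_le_trans nth_mem zero_less_one)
  have A: "\<forall>i\<in>{1..P}. T i \<noteq> {}"
    using nth_in unfolding T_def KS_def by force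
  have B: "\<forall>i\<in>{1..P}. \<forall>j\<in>{1..P}. i \<noteq> j \<longrightarrow> T i \<inter> T j = {}"
  proof (intro ballI impI)
    fix i j assume ij: "i \<in> {1..P}" "j \<in> {1..P}" "i \<noteq> j"
    then have "i - 1 \<noteq> j - 1" "i - 1 < length ks" "j - 1 < length ks" unfolding P_def by auto
    then have "ks ! (i - 1) \<noteq> ks ! (j - 1)" using dks
      by (simp add: nth_eq_iff_index_eq)
    then show "T i \<inter> T j = {}" unfolding T_def by auto
  qed
  have Cc: "(\<Union>i\<in>{1..P}. T i) = C"
  proof
    show "(\<Union>i\<in>{1..P}. T i) \<subseteq> C" unfolding T_def by auto
  next
    show "C \<subseteq> (\<Union>i\<in>{1..P}. T i)"
    proof
      fix y assume y: "y \<in> C"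
      then have "k y \<in> set ks" using setks KS_def by simp
      then obtain j where j: "j < length ks" "ks ! j = k y" by (metis in_set_conv_nth)
      then have "Suc j \<in> {1..P}" "y \<in> T (Suc j)" unfolding P_def T_def using y by auto
      then show "y \<in> (\<Union>i\<in>{1..P}. T i)" by blast
    qed
  qed
  have D: "\<forall>i\<in>{1..P}. \<forall>y\<in>T i. \<forall>z\<in>T i. Fin y z"
    unfolding T_def using keqF by auto
  have E: "\<forall>i m. i \<ge> 1 \<longrightarrow> m \<ge> 1 \<longrightarrow> i + m \<le> P \<longrightarrow> (\<forall>y\<in>T i. \<forall>z\<in>T (i + m). Up y z)"
  proof (intro allI impI ballI)
    fix i m y z assume h: "1 \<le> i" "1 \<le> m" "i + m \<le> P" "y \<in> T i" "z \<in> T (i + m)"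
    have "ks ! (i - 1) < ks ! (i + m - 1)"
      using sorted_wrt_nth_less[OF sks, of "i - 1" "i + m - 1"] h unfolding P_def by auto
    then show "Up y z" using h unfolding T_def using klessU by auto
  qed
  have F: "\<forall>y\<in>T 1. \<forall>z\<in>C. \<not> Up z y"
  proof (intro ballI notI)
    fix y z assume h: "y \<in> T 1" "z \<in> C" "Up z y"
    have "k z \<in> set ks" using setks KS_def h(2) by simp
    then obtain j where j: "j < length ks" "ks ! j = k z" by (metis in_set_conv_nth)
    have "ks ! 0 \<le> ks ! j"
      using sks j by (metis le_eq_less_or_eq not_gr_zero sorted_wrt_nth_less)
    moreover have "k z < k y" using h kless[of z y] unfolding T_def by auto
    ultimately show False using h(1) j unfolding T_def by simp
  qed
  have G: "T 1 \<subseteq> C" unfolding T_def by auto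
  show thesis using that[of P T] P1 A B Cc D E F G by simp
qed

theorem mainTheorem4:
  fixes C :: "('n::finite) complex set"
    and R :: "'n reaction set"
    and \<kappa> :: "'n reaction \<Rightarrow> real \<Rightarrow> real"
    and \<eta> :: real
    and D :: "('n \<Rightarrow> real) set"
  assumes "crn C R"
    and "weakly_reversible R"
    and "bounded_kinetics R \<kappa> \<eta>"
    and "\<forall>x\<in>D. \<forall>i. x i > 0"
  shows "(\<exists>M>0. \<forall>x\<in>D. (\<exists>i. x i > M \<or> x i < 1 / M) \<longrightarrow>
            (\<forall>t\<ge>0. dotp (mass_action_field R \<kappa> t x) (\<lambda>i. ln (x i)) < 0))
       \<or> (\<exists>xs :: nat \<Rightarrow> 'n \<Rightarrow> real. (\<forall>n. xs n \<in> D) \<and>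
            (\<exists>i. (\<lambda>n. xs n i) \<longlonglongrightarrow> 0 \<or> filterlim (\<lambda>n. xs n i) at_top sequentially) \<and>
            (\<exists>P T K. partitioned_along C xs P T K \<and> union_of_linkage_classes C R (T 1)))"
proof (rule disjCI2)
  let ?dot = "\<lambda>t x. dotp (mass_action_field R \<kappa> t x) (\<lambda>i. ln (x i))"
  assume nC1: "\<not> (\<exists>M>0. \<forall>x\<in>D. (\<exists>i. x i > M \<or> x i < 1 / M) \<longrightarrow>
            (\<forall>t\<ge>0. dotp (mass_action_field R \<kappa> t x) (\<lambda>i. ln (x i)) < 0))"
  have ex: "\<forall>n::nat. \<exists>x t. x \<in> D \<and> (\<exists>i. x i > real n + 1 \<or> x i < 1 / (real n + 1)) \<and> t \<ge> 0 \<and> 0 \<le> ?dot t x"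
  proof
    fix n :: nat
    have "real n + 1 > 0" by simp
    have "\<not> (\<forall>x\<in>D. (\<exists>i. x i > real n + 1 \<or> x i < 1 / (real n + 1)) \<longrightarrow> (\<forall>t\<ge>0. ?dot t x < 0))"
    proof
      assume H: "\<forall>x\<in>D. (\<exists>i. x i > real n + 1 \<or> x i < 1 / (real n + 1)) \<longrightarrow> (\<forall>t\<ge>0. ?dot t x < 0)"
      have "\<exists>M>0. \<forall>x\<in>D. (\<exists>i. x i > M \<or> x i < 1 / M) \<longrightarrow> (\<forall>t\<ge>0. ?dot t x < 0)"
        by (rule exI[of _ "real n + 1"], rule conjI, simp, rule H)
      then show False using nC1 by (rule notE[rotated])
    qed
    then obtain x where "x \<in> D" "\<exists>i. x i > real n + 1 \<or> x i < 1 / (real n + 1)" "\<not> (\<forall>t\<ge>0. ?dot t x < 0)"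
      by blast
    then obtain t where "t \<ge> 0" "\<not> ?dot t x < 0" by blast
    then show "\<exists>x t. x \<in> D \<and> (\<exists>i. x i > real n + 1 \<or> x i < 1 / (real n + 1)) \<and> t \<ge> 0 \<and> 0 \<le> ?dot t x"
      using \<open>x \<in> D\<close> \<open>\<exists>i. _\<close> by (intro exI[of _ x] exI[of _ t]) auto
  qed
  from choice[OF ex] obtain X where X0: "\<forall>n. \<exists>t. X n \<in> D \<and> (\<exists>i. X n i > real n + 1 \<or> X n i < 1 / (real n + 1)) \<and> t \<ge> 0 \<and> 0 \<le> ?dot t (X n)"
    by (rule exE)
  from choice[OF X0] obtain TT where X1: "\<forall>n. X n \<in> D \<and> (\<exists>i. X n i > real n + 1 \<or> X n i < 1 / (real n + 1)) \<and> TT n \<ge> 0 \<and> 0 \<le> ?dot (TT n) (X n)"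
    by (rule exE)
  have X: "\<And>n. X n \<in> D" "\<And>n. \<exists>i. X n i > real n + 1 \<or> X n i < 1 / (real n + 1)"
    "\<And>n. TT n \<ge> 0" "\<And>n. 0 \<le> ?dot (TT n) (X n)"
    using X1 by auto
  have pos: "\<And>n i. X n i > 0" using X(1) assms(4) by blast
  have finC: "finite C" and finR: "finite R" using assms(1) unfolding crn_def by auto
  have RC: "\<And>y y'. (y, y') \<in> R \<Longrightarrow> y \<in> C \<and> y' \<in> C" using assms(1) unfolding crn_def by fast
  have neC: "C \<noteq> {}" using assms(1) unfolding crn_def by blast
  have eta: "\<eta> > 0" and kap: "\<And>rr t. rr \<in> R \<Longrightarrow> t \<ge> 0 \<Longrightarrow> \<eta> < \<kappa> rr t \<and> \<kappa> rr t < 1 / \<eta>"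
    using assms(3) unfolding bounded_kinetics_def by auto
  define a where "a n y = ln (mpow (X n) y)" for n y
  obtain r1 where r1: "strict_mono r1" "\<forall>p\<in>C \<times> C. \<exists>l. (\<lambda>n. ereal (a (r1 n) (fst p) - a (r1 n) (snd p))) \<longlonglongrightarrow> l"
    using subseq_conv[of "C \<times> C" "\<lambda>p n. ereal (a n (fst p) - a n (snd p))"] finC by auto
  obtain r2 where r2: "strict_mono r2" "\<forall>i\<in>UNIV. \<exists>l. (\<lambda>n. ereal (ln (X (r1 (r2 n)) i))) \<longlonglongrightarrow> l"
    using subseq_conv[of "UNIV" "\<lambda>i n. ereal (ln (X (r1 n) i))"] by auto
  define r where "r = r1 \<circ> r2"
  have smr: "strict_mono r" unfolding r_def using r1 r2 by (simp add: strict_mono_o)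
  define xs where "xs n = X (r n)" for n
  define dd where "dd y z n = a (r n) y - a (r n) z" for y z n
  define Up where "Up y z = filterlim (dd y z) at_top sequentially" for y z
  define Fin where "Fin y z = (\<exists>B. \<forall>n. \<bar>dd y z n\<bar> \<le> B)" for y z
  have conv: "\<exists>l. (\<lambda>n. ereal (dd y z n)) \<longlonglongrightarrow> l" if yz: "y \<in> C" "z \<in> C" for y z
  proof -
    obtain l where "(\<lambda>n. ereal (a (r1 n) y - a (r1 n) z)) \<longlonglongrightarrow> l" using r1(2) yz by force
    from LIMSEQ_subseq_LIMSEQ[OF this r2(1)] show ?thesis
      unfolding dd_def r_def by (auto simp: comp_def)
  qed
  have ddneg: "dd z y n = - dd y z n" for y z n unfolding dd_def by simp
  have ddadd: "dd w z n = dd w y n + dd y z n" for w y z n unfolding dd_def by simp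
  have ddneg': "dd z y = (\<lambda>n. - dd y z n)" for y z by (rule ext) (simp add: dd_def)
  have trich': "Up y z \<or> Fin y z \<or> Up z y" if "y \<in> C" "z \<in> C" for y z
    using trich[of "dd y z"] conv[OF that] unfolding Up_def Fin_def ddneg'[of z y] by blast
  have irr: "\<not> Up y y" for y
  proof
    assume "Up y y"
    then have "eventually (\<lambda>n. 1 \<le> dd y y n) sequentially" unfolding Up_def filterlim_at_top by blast
    then show False unfolding dd_def by simp
  qed
  have UU: "Up w z" if "Up w y" "Up y z" for w y z
  proof -
    have "filterlim (\<lambda>n. dd w y n + dd y z n) at_top sequentially"
      using that unfolding Up_def by (rule filterlim_at_top_add_at_top)
    then show ?thesis unfolding Up_def using ddadd[of w z] by simp
  qed
  have UF: "Up w z" if hUF: "Up w y" "Fin y z" for w y z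
  proof -
    obtain B where B: "\<forall>n. \<bar>dd y z n\<bar> \<le> B" using hUF(2) unfolding Fin_def by blast
    have "\<forall>Z. eventually (\<lambda>n. Z \<le> dd w z n) sequentially"
    proof
      fix Z
      have "eventually (\<lambda>n. Z + B \<le> dd w y n) sequentially" using hUF(1) unfolding Up_def filterlim_at_top by blast
      then show "eventually (\<lambda>n. Z \<le> dd w z n) sequentially"
      proof (rule eventually_mono)
        fix n assume "Z + B \<le> dd w y n"
        then show "Z \<le> dd w z n" using B[rule_format, of n] ddadd[of w z n y] by linarith
      qed
    qed
    then show ?thesis unfolding Up_def filterlim_at_top by blast
  qed
  have Fsym: "Fin z y" if "Fin y z" for y z
    using that unfolding Fin_def by (simp add: ddneg[of y z])
  have UU': "\<And>w y z. w \<in> C \<Longrightarrow> y \<in> C \<Longrightarrow> z \<in> C \<Longrightarrow> Up w y \<Longrightarrow> Up y z \<Longrightarrow> Up w z" using UU by blast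
  have UF': "\<And>w y z. w \<in> C \<Longrightarrow> y \<in> C \<Longrightarrow> z \<in> C \<Longrightarrow> Up w y \<Longrightarrow> Fin y z \<Longrightarrow> Up w z" using UF by blast
  have Fsym': "\<And>y z. y \<in> C \<Longrightarrow> z \<in> C \<Longrightarrow> Fin y z \<Longrightarrow> Fin z y" using Fsym by blast
  obtain P T where T: "(P::nat) \<ge> 1" "\<forall>i\<in>{1..P}. T i \<noteq> {}"
     "\<forall>i\<in>{1..P}. \<forall>j\<in>{1..P}. i \<noteq> j \<longrightarrow> T i \<inter> T j = {}"
     "(\<Union>i\<in>{1..P}. T i) = C"
     "\<forall>i\<in>{1..P}. \<forall>y\<in>T i. \<forall>z\<in>T i. Fin y z"
     "\<forall>i m. i \<ge> 1 \<longrightarrow> m \<ge> 1 \<longrightarrow> i + m \<le> P \<longrightarrow> (\<forall>y\<in>T i. \<forall>z\<in>T (i + m). Up y z)"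
     "\<forall>y\<in>T 1. \<forall>z\<in>C. \<not> Up z y" "T 1 \<subseteq> C"
    by (rule tiers_exist[of C Up Fin, OF finC neC trich' irr UU' UF' Fsym'])
  have xpos: "\<And>n i. xs n i > 0" unfolding xs_def using pos by blast
  have mexp: "mpow (xs n) w = exp (dd w w n + a (r n) w)" for n w
    unfolding dd_def a_def xs_def using mpow_pos[of "X (r n)" w] pos by simp
  have mexp': "mpow (xs n) w = exp (a (r n) w)" for n w using mexp[of n w] unfolding dd_def by simp
  have stepT: "y' \<in> T 1" if yT: "y \<in> T 1" and yr: "(y, y') \<in> R" for y y'
  proof (rule ccontr)
    assume nT: "y' \<notin> T 1"
    have yC: "y \<in> C" and y'C: "y' \<in> C" using RC[OF yr] by auto
    obtain i where i: "i \<in> {1..P}" "y' \<in> T i" using T(4) y'C by blast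
    then have "i \<ge> 2" using nT by (cases "i = 1") auto
    then have ii: "1 + (i - 1) = i" "1 \<le> i - 1" "1 + (i - 1) \<le> P" using i by auto
    have "\<forall>y\<in>T 1. \<forall>z\<in>T (1 + (i - 1)). Up y z" using T(6) ii by blast
    then have Uyy': "Up y y'" using yT i(2) ii(1) by simp
    show False
    proof (rule key_contra[of R y y' "\<lambda>n w. mpow (xs n) w" \<eta> "\<lambda>n rr. \<kappa> rr (TT (r n))"])
      show "finite R" by (rule finR)
      show "(y, y') \<in> R" by (rule yr)
      show "\<And>n w. 0 < mpow (xs n) w" using mpow_pos xpos by blast
      show "0 < \<eta>" by (rule eta)
      show "\<And>n rr. rr \<in> R \<Longrightarrow> \<eta> < \<kappa> rr (TT (r n)) \<and> \<kappa> rr (TT (r n)) < 1 / \<eta>"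
        using kap X(3) by blast
      show "\<And>n. 0 \<le> (\<Sum>rr\<in>R. \<kappa> rr (TT (r n)) * mpow (xs n) (fst rr) * (ln (mpow (xs n) (snd rr)) - ln (mpow (xs n) (fst rr))))"
      proof -
        fix n
        have p: "\<forall>i. X (r n) i > 0" using pos by blast
        show "0 \<le> (\<Sum>rr\<in>R. \<kappa> rr (TT (r n)) * mpow (xs n) (fst rr) * (ln (mpow (xs n) (snd rr)) - ln (mpow (xs n) (fst rr))))"
          using X(4)[of "r n"] unfolding dot_eq[OF p finR] xs_def .
      qed
      show "\<forall>rr\<in>R. \<exists>B. eventually (\<lambda>n. mpow (xs n) (snd rr) \<le> B * mpow (xs n) y) sequentially"
      proof
        fix rr assume "rr \<in> R"
        then have zC: "snd rr \<in> C" using RC by (cases rr) auto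
        let ?z = "snd rr"
        have "\<not> Up ?z y" using T(7) yT zC by blast
        then have "Up y ?z \<or> Fin y ?z" using trich'[OF yC zC] by blast
        then show "\<exists>B. eventually (\<lambda>n. mpow (xs n) ?z \<le> B * mpow (xs n) y) sequentially"
        proof
          assume "Up y ?z"
          then have "eventually (\<lambda>n. 0 \<le> dd y ?z n) sequentially" unfolding Up_def filterlim_at_top by blast
          then have "eventually (\<lambda>n. mpow (xs n) ?z \<le> 1 * mpow (xs n) y) sequentially"
            by eventually_elim (simp add: mexp' dd_def)
          then show ?thesis by blast
        next
          assume "Fin y ?z"
          then obtain B where B: "\<forall>n. \<bar>dd y ?z n\<bar> \<le> B" unfolding Fin_def by blast
          have "mpow (xs n) ?z \<le> exp B * mpow (xs n) y" for n
          proof -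
            have "a (r n) ?z \<le> B + a (r n) y" using B[rule_format, of n] unfolding dd_def by linarith
            then have "exp (a (r n) ?z) \<le> exp (B + a (r n) y)" by simp
            then show ?thesis by (simp add: mexp' exp_add)
          qed
          then have "eventually (\<lambda>n. mpow (xs n) ?z \<le> exp B * mpow (xs n) y) sequentially" by simp
          then show ?thesis by blast
        qed
      qed
      show "filterlim (\<lambda>n. ln (mpow (xs n) y) - ln (mpow (xs n) y')) at_top sequentially"
        using Uyy' unfolding Up_def dd_def by (simp add: mexp')
    qed
  qed
  have T1: "union_of_linkage_classes C R (T 1)"
    unfolding union_of_linkage_classes_def
  proof (intro conjI ballI allI impI)
    show "T 1 \<noteq> {}" using T(1,2) by auto
    show "T 1 \<subseteq> C" by (rule T(8))
    fix y y' assume y: "y \<in> T 1" and "linked R y y'"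
    then have "(y, y') \<in> R\<^sup>*" using assms(2) unfolding weakly_reversible_def by blast
    then show "y' \<in> T 1" using y
    proof (induction rule: rtrancl_induct)
      case base then show ?case .
    next
      case (step a b) then show ?case using stepT[of a b] by blast
    qed
  qed
  define BB where "BB y z = (SOME B. \<forall>n. \<bar>dd y z n\<bar> \<le> B)" for y z
  have BB: "\<forall>n. \<bar>dd y z n\<bar> \<le> BB y z" if "Fin y z" for y z
    using that unfolding Fin_def BB_def by (rule someI_ex)
  define S where "S = (\<Sum>p\<in>C \<times> C. \<bar>BB (fst p) (snd p)\<bar>)"
  define K where "K = exp (S + 1)"
  have BBS: "\<bar>BB y z\<bar> \<le> S" if "y \<in> C" "z \<in> C" for y z
    unfolding S_def using member_le_sum[of "(y, z)" "C \<times> C" "\<lambda>p. \<bar>BB (fst p) (snd p)\<bar>"] that finC by auto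
  have S0: "S \<ge> 0" unfolding S_def by (simp add: sum_nonneg)
  have K1: "K > 1" unfolding K_def using S0 by simp
  have bnd: "mpow (xs n) z \<le> K * mpow (xs n) y" if "y \<in> C" "z \<in> C" "Fin z y" for y z n
  proof -
    have "\<bar>dd z y n\<bar> \<le> BB z y" using BB[OF that(3)] by blast
    moreover have "BB z y \<le> \<bar>BB z y\<bar>" by simp
    ultimately have "dd z y n \<le> S + 1" using BBS[OF that(2,1)] by linarith
    then have "a (r n) z \<le> (S + 1) + a (r n) y" unfolding dd_def by linarith
    then have "exp (a (r n) z) \<le> exp ((S + 1) + a (r n) y)" by simp
    then show ?thesis unfolding K_def by (simp add: mexp' exp_add)
  qed
  have part: "partitioned_along C xs P T K"
    unfolding partitioned_along_def
  proof (intro conjI)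
    show "1 \<le> P" by (rule T(1))
    show "1 < K" by (rule K1)
    show "\<forall>i\<in>{1..P}. T i \<noteq> {}" by (rule T(2))
    show "\<forall>i\<in>{1..P}. \<forall>j\<in>{1..P}. i \<noteq> j \<longrightarrow> T i \<inter> T j = {}" by (rule T(3))
    show "(\<Union>i\<in>{1..P}. T i) = C" by (rule T(4))
    show "\<forall>i\<in>{1..P}. \<forall>yj\<in>T i. \<forall>yk\<in>T i. \<forall>n. mpow (xs n) yj / K \<le> mpow (xs n) yk \<and> mpow (xs n) yk \<le> K * mpow (xs n) yj"
    proof (intro ballI allI conjI)
      fix i yj yk n assume h: "i \<in> {1..P}" "yj \<in> T i" "yk \<in> T i"
      then have C: "yj \<in> C" "yk \<in> C" using T(4) by auto
      have F: "Fin yj yk" "Fin yk yj" using T(5) h by auto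
      show "mpow (xs n) yk \<le> K * mpow (xs n) yj" using bnd[OF C F(2)] .
      show "mpow (xs n) yj / K \<le> mpow (xs n) yk"
        using bnd[OF C(2,1) F(1), of n] K1 by (simp add: divide_le_eq mult.commute)
    qed
    show "\<forall>i m. 1 \<le> i \<longrightarrow> 1 \<le> m \<longrightarrow> i + m \<le> P \<longrightarrow> (\<forall>yj\<in>T i. \<forall>yk\<in>T (i + m).
           filterlim (\<lambda>n. mpow (xs n) yj / mpow (xs n) yk) at_top sequentially)"
    proof (intro allI impI ballI)
      fix i m yj yk assume h: "1 \<le> i" "1 \<le> m" "i + m \<le> P" "yj \<in> T i" "yk \<in> T (i + m)"
      then have "Up yj yk" using T(6) by blast
      then have "filterlim (\<lambda>n. exp (dd yj yk n)) at_top sequentially"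
        unfolding Up_def by (rule filterlim_compose[OF exp_at_top])
      then show "filterlim (\<lambda>n. mpow (xs n) yj / mpow (xs n) yk) at_top sequentially"
        by (simp add: mexp' dd_def exp_diff)
    qed
  qed
  have coord: "\<exists>i. (\<lambda>n. xs n i) \<longlonglongrightarrow> 0 \<or> filterlim (\<lambda>n. xs n i) at_top sequentially"
  proof (rule ccontr)
    assume nc: "\<not> ?thesis"
    have bd: "\<exists>B. \<forall>n. \<bar>ln (xs n i)\<bar> \<le> B" for i
    proof -
      obtain l where "(\<lambda>n. ereal (ln (xs n i))) \<longlonglongrightarrow> l" using r2(2) unfolding xs_def r_def by auto
      then have tr: "filterlim (\<lambda>n. ln (xs n i)) at_top sequentially \<or> (\<exists>B. \<forall>n. \<bar>ln (xs n i)\<bar> \<le> B)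
           \<or> filterlim (\<lambda>n. - ln (xs n i)) at_top sequentially" by (rule trich)
      have ex: "(\<lambda>n. exp (ln (xs n i))) = (\<lambda>n. xs n i)" using xpos by simp
      show ?thesis
      proof (rule disjE[OF tr])
        assume "filterlim (\<lambda>n. ln (xs n i)) at_top sequentially"
        then have "filterlim (\<lambda>n. exp (ln (xs n i))) at_top sequentially"
          by (rule filterlim_compose[OF exp_at_top])
        then show ?thesis using nc ex by auto
      next
        assume "(\<exists>B. \<forall>n. \<bar>ln (xs n i)\<bar> \<le> B) \<or> filterlim (\<lambda>n. - ln (xs n i)) at_top sequentially"
        then show ?thesis
        proof
          assume "filterlim (\<lambda>n. - ln (xs n i)) at_top sequentially"
          then have "filterlim (\<lambda>n. ln (xs n i)) at_bot sequentially"
            using filterlim_uminus_at_top[of "\<lambda>n. - ln (xs n i)"] by simp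
          then have "(\<lambda>n. exp (ln (xs n i))) \<longlonglongrightarrow> 0"
            by (rule filterlim_compose[OF exp_at_bot])
          then show ?thesis using nc ex by auto
        qed
      qed
    qed
    have "\<forall>i. \<exists>B. \<forall>n. \<bar>ln (xs n i)\<bar> \<le> B" using bd by blast
    from choice[OF this] obtain Bf where Bf0: "\<forall>i n. \<bar>ln (xs n i)\<bar> \<le> Bf i" by blast
    have Bf: "\<And>i n. \<bar>ln (xs n i)\<bar> \<le> Bf i" using Bf0 by blast
    define Bm where "Bm = (\<Sum>i\<in>UNIV. \<bar>Bf i\<bar>)"
    have Bm: "\<bar>ln (xs n i)\<bar> \<le> Bm" for n i
    proof -
      have "Bf i \<le> \<bar>Bf i\<bar>" by simp
      also have "\<dots> \<le> Bm" unfolding Bm_def by (rule member_le_sum) auto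
      finally show ?thesis using Bf[of n i] by linarith
    qed
    define n where "n = nat \<lceil>exp Bm\<rceil>"
    have "real (r n) \<ge> real n" using seq_suble[OF smr, of n] by simp
    moreover have "real n \<ge> exp Bm" unfolding n_def by linarith
    ultimately have big: "real (r n) + 1 > exp Bm" by linarith
    obtain i where i: "xs n i > real (r n) + 1 \<or> xs n i < 1 / (real (r n) + 1)"
      using X(2)[of "r n"] unfolding xs_def by blast
    then show False
    proof
      assume "xs n i > real (r n) + 1"
      then have "xs n i > exp Bm" using big by linarith
      then have "ln (exp Bm) < ln (xs n i)" using xpos[of n i] by (subst ln_less_cancel_iff) auto
      then have "ln (xs n i) > Bm" by simp
      then show False using Bm[of n i] by linarith
    next
      assume a1: "xs n i < 1 / (real (r n) + 1)"
      have "1 / (real (r n) + 1) < 1 / exp Bm" using big by (intro divide_strict_left_mono) auto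
      moreover have "1 / exp Bm = exp (- Bm)" by (simp add: exp_minus inverse_eq_divide)
      ultimately have "xs n i < exp (- Bm)" using a1 by linarith
      then have "ln (xs n i) < ln (exp (- Bm))" using xpos[of n i] by (subst ln_less_cancel_iff) auto
      then have "ln (xs n i) < - Bm" by simp
      then show False using Bm[of n i] by linarith
    qed
  qed
  have "\<forall>n. xs n \<in> D" unfolding xs_def using X(1) by blast
  then show "\<exists>xs :: nat \<Rightarrow> 'n \<Rightarrow> real. (\<forall>n. xs n \<in> D) \<and>
            (\<exists>i. (\<lambda>n. xs n i) \<longlonglongrightarrow> 0 \<or> filterlim (\<lambda>n. xs n i) at_top sequentially) \<and>
            (\<exists>P T K. partitioned_along C xs P T K \<and> union_of_linkage_classes C R (T 1))"
  proof (intro exI[of _ xs] conjI)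
    show "\<exists>P T K. partitioned_along C xs P T K \<and> union_of_linkage_classes C R (T 1)"
      using part T1 by blast
  qed (use coord in auto)
qed

end
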